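(* Let $A\cong \mathrm{Aff}(E,C)$ be a group of affine cyclic type. Let $G$ be a finite group with a normal subgroup $N$ such that $G/N\cong A$, and assume that no proper subgroup of $G$ has a quotient isomorphic to $A$. Then $G$ is a group of the form $P\rtimes \mathbb{Z}_m$, where $P$ is a $p$-group, $m$ is a power of a prime $q\ne p$, and the image of $\mathbb{Z}_m$ in $\mathrm{Aut}(P)$ has order at least $|C|$.
   Context: A group of affine cyclic type $\mathrm{Aff}(E,C)$ is a finite group $E\rtimes C$ where $E$ is an elementary abelian $p$-group and $C$ is a cyclic group of prime power order acting faithfully on $E$, with $p\nmid|C|$. $\mathbb{Z}_m$ denotes the cyclic group of order $m$. *)

theory Defs
  imports "HOL-Algebra.Algebra"
begin

definition elem_abelian_sub :: "('a, 'b) monoid_scheme \<Rightarrow> nat \<Rightarrow> 'a set \<Rightarrow> bool" where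
  "elem_abelian_sub A p E \<longleftrightarrow> Factorial_Ring.prime p \<and> subgroup E A \<and> finite E \<and>
     (\<forall>x\<in>E. \<forall>y\<in>E. x \<otimes>\<^bsub>A\<^esub> y = y \<otimes>\<^bsub>A\<^esub> x) \<and>
     (\<forall>x\<in>E. x [^]\<^bsub>A\<^esub> p = \<one>\<^bsub>A\<^esub>)"

(* A = E \<rtimes> C is of affine cyclic type Aff(E,C) (internal semidirect product):
   E normal elementary abelian p-group, C cyclic of prime-power order, p does not divide |C|,
   E \<inter> C = 1, EC = A, and C acts faithfully on E by conjugation. *)
definition affine_cyclic_decomp ::
  "('a, 'b) monoid_scheme \<Rightarrow> nat \<Rightarrow> 'a set \<Rightarrow> 'a set \<Rightarrow> bool" where
  "affine_cyclic_decomp A p E C \<longleftrightarrow>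
     group A \<and> finite (carrier A) \<and>
     elem_abelian_sub A p E \<and> E \<lhd> A \<and>
     subgroup C A \<and> cyclic_group (subgroup_generated A C) \<and>
     (\<exists>q k. Factorial_Ring.prime q \<and> card C = q ^ k) \<and> \<not> p dvd card C \<and>
     E \<inter> C = {\<one>\<^bsub>A\<^esub>} \<and> E <#>\<^bsub>A\<^esub> C = carrier A \<and>
     (\<forall>c\<in>C. (\<forall>e\<in>E. c \<otimes>\<^bsub>A\<^esub> e \<otimes>\<^bsub>A\<^esub> inv\<^bsub>A\<^esub> c = e) \<longrightarrow> c = \<one>\<^bsub>A\<^esub>)"

end

theory Submission
  imports Defs
begin

lemma (in group) rcoset_action:
  assumes "subgroup S G"
  shows "group_action G (rcosets S) (\<lambda>g. \<lambda>U\<in>rcosets S. U #> inv g)"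
  unfolding group_action_def group_hom_def group_hom_axioms_def
proof (intro conjI)
  show "group G" by (rule is_group)
  show "group (BijGroup (rcosets S))" by (rule group_BijGroup)
  have cl: "U #> h \<in> rcosets S" if "U \<in> rcosets S" "h \<in> carrier G" for U h
    using that by (auto simp: RCOSETS_def coset_mult_assoc assms subgroup.subset)
  have inv2: "(U #> h) #> inv h = U" if "U \<in> rcosets S" "h \<in> carrier G" for U h
    using that by (auto simp: RCOSETS_def coset_mult_assoc assms subgroup.subset m_assoc)
  have bij: "(\<lambda>U\<in>rcosets S. U #> inv g) \<in> Bij (rcosets S)" if g: "g \<in> carrier G" for g
    unfolding Bij_def
  proof
    show "(\<lambda>U\<in>rcosets S. U #> inv g) \<in> extensional (rcosets S)" by (rule restrict_extensional)
    have "bij_betw (\<lambda>U. U #> inv g) (rcosets S) (rcosets S)"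
    proof (rule bij_betwI[where g="\<lambda>U. U #> g"])
      show "(\<lambda>U. U #> inv g) \<in> rcosets S \<rightarrow> rcosets S"
        using cl g by (intro funcsetI) simp
      show "(\<lambda>U. U #> g) \<in> rcosets S \<rightarrow> rcosets S"
        using cl g by (intro funcsetI) simp
      fix U assume U: "U \<in> rcosets S"
      show "U #> inv g #> g = U" using inv2[OF U, of "inv g"] g by simp
    next
      fix U assume U: "U \<in> rcosets S"
      show "U #> g #> inv g = U" using inv2[OF U g] .
    qed
    then show "(\<lambda>U\<in>rcosets S. U #> inv g) \<in> {f. bij_betw f (rcosets S) (rcosets S)}"
      by simp
  qed
  show "(\<lambda>g. \<lambda>U\<in>rcosets S. U #> inv g) \<in> hom G (BijGroup (rcosets S))"
    unfolding hom_def
  proof (safe)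
    fix g assume "g \<in> carrier G" then show "(\<lambda>U\<in>rcosets S. U #> inv g) \<in> carrier (BijGroup (rcosets S))"
      using bij by (simp add: BijGroup_def)
  next
    fix x y assume xy: "x \<in> carrier G" "y \<in> carrier G"
    have "(\<lambda>U\<in>rcosets S. U #> inv (x \<otimes> y)) = compose (rcosets S) (\<lambda>U\<in>rcosets S. U #> inv x) (\<lambda>U\<in>rcosets S. U #> inv y)"
    proof (rule ext)
      fix U show "(\<lambda>U\<in>rcosets S. U #> inv (x \<otimes> y)) U = compose (rcosets S) (\<lambda>U\<in>rcosets S. U #> inv x) (\<lambda>U\<in>rcosets S. U #> inv y) U"
      proof (cases "U \<in> rcosets S")
        case True
        then obtain z where z: "z \<in> carrier G" "U = S #> z" by (auto simp: RCOSETS_def)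
        have "U #> inv (x \<otimes> y) = U #> inv y #> inv x"
          using z xy assms by (simp add: inv_mult_group coset_mult_assoc subgroup.subset m_assoc)
        then show ?thesis using True cl xy by (simp add: compose_def)
      qed (simp add: compose_def)
    qed
    then show "(\<lambda>U\<in>rcosets S. U #> inv (x \<otimes> y)) = (\<lambda>U\<in>rcosets S. U #> inv x) \<otimes>\<^bsub>BijGroup (rcosets S)\<^esub> (\<lambda>U\<in>rcosets S. U #> inv y)"
      using bij xy by (simp add: BijGroup_def)
  qed
qed

lemma (in group) sylow_fix:
  assumes fin: "finite (carrier G)" and p: "Factorial_Ring.prime p" and S: "subgroup S G" and T: "subgroup T G"
    and cS: "card S = p^a" and cT: "card T = p^b" and ord: "order G = p^a * m" and nd: "\<not> p dvd m"
  shows "\<exists>y\<in>carrier G. \<forall>t\<in>T. y \<otimes> t \<otimes> inv y \<in> S"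
proof -
  define \<phi> where "\<phi> = (\<lambda>g. \<lambda>U\<in>rcosets S. U #> inv g)"
  define TT where "TT = G\<lparr>carrier := T\<rparr>"
  interpret A: group_action TT "rcosets S" \<phi>
    unfolding \<phi>_def TT_def using group_action.induced_action[OF rcoset_action[OF S] T] .
  have finR: "finite (rcosets S)"
    using rcosets_subset_PowG[OF S] fin by (meson finite_Pow_iff finite_subset)
  have "card (rcosets S) * p^a = p^a * m" using lagrange[OF S] ord cS by simp
  then have cardR: "card (rcosets S) = m" using p by (simp add: prime_gt_0_nat)
  have sum: "(\<Sum>orb\<in>orbits TT (rcosets S) \<phi>. card orb) = m"
  proof -
    have "(\<Sum>orb\<in>orbits TT (rcosets S) \<phi>. \<Sum>x\<in>orb. (1::nat)) = (\<Sum>x\<in>rcosets S. 1)"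
      using A.disjoint_sum[OF finR] .
    moreover have "(\<Sum>orb\<in>orbits TT (rcosets S) \<phi>. \<Sum>x\<in>orb. (1::nat)) = (\<Sum>orb\<in>orbits TT (rcosets S) \<phi>. card orb)"
      by (intro sum.cong) auto
    ultimately show ?thesis using cardR by simp
  qed
  have "\<exists>orb\<in>orbits TT (rcosets S) \<phi>. \<not> p dvd card orb"
  proof (rule ccontr)
    assume "\<not> ?thesis"
    then have "p dvd (\<Sum>orb\<in>orbits TT (rcosets S) \<phi>. card orb)" by (auto intro: dvd_sum)
    then show False using sum nd by simp
  qed
  then obtain x where x: "x \<in> rcosets S" and np: "\<not> p dvd card (orbit TT \<phi> x)"
    unfolding orbits_def by blast
  have "card (orbit TT \<phi> x) * card (stabilizer TT \<phi> x) = p^b"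
    using A.orbit_stabilizer_theorem[OF x] cT by (simp add: TT_def order_def)
  then have "card (orbit TT \<phi> x) dvd p^b" by (metis dvd_triv_left)
  then obtain i where "card (orbit TT \<phi> x) = p^i" using divides_primepow_nat[OF p] by blast
  with np have c1: "card (orbit TT \<phi> x) = 1" by (cases i) auto
  have xo: "x \<in> orbit TT \<phi> x" using A.orbit_refl[OF x] .
  have fix1: "\<phi> t x = x" if t: "t \<in> T" for t
  proof -
    have "\<phi> t x \<in> orbit TT \<phi> x" using t unfolding orbit_def TT_def by auto
    then show ?thesis using c1 xo by (metis card_1_singletonE singletonD)
  qed
  obtain y0 where y0: "y0 \<in> carrier G" "x = S #> y0" using x by (auto simp: RCOSETS_def)
  have "inv y0 \<in> carrier G" using y0 by simp
  show ?thesis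
  proof (intro bexI ballI)
    fix t assume t: "t \<in> T"
    have tG: "t \<in> carrier G" using t T subgroup.subset by blast
    have "S #> y0 #> inv (inv t) = S #> y0" using fix1[of "inv t"] t T y0 x
      by (simp add: \<phi>_def subgroup.m_inv_closed)
    then have "S #> (y0 \<otimes> t) = S #> y0" using tG y0 S by (simp add: coset_mult_assoc subgroup.subset)
    then have "y0 \<otimes> t \<in> S #> y0" using repr_independenceD[OF S] tG y0 by (metis m_closed)
    then show "y0 \<otimes> t \<otimes> inv y0 \<in> S" using subgroup.rcos_module_imp[OF S is_group y0(1)] by blast
  qed (rule y0)
qed

lemma nat_decomp:
  fixes n q :: nat assumes "n > 0" "Factorial_Ring.prime q"
  obtains b s where "n = q^b * s" "\<not> q dvd s"
  using multiplicity_decompose'[of n q] assms by (metis not_prime_unit gr_implies_not0)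

lemma (in group) subgroup_card_dvd:
  assumes "subgroup H G" "subgroup K G" "H \<subseteq> K"
  shows "card H dvd card K"
proof -
  interpret K: group "G\<lparr>carrier := K\<rparr>" using subgroup_imp_group[OF assms(2)] .
  have "subgroup H (G\<lparr>carrier := K\<rparr>)" using subgroup_incl assms by blast
  from K.lagrange[OF this] show ?thesis by (simp add: order_def) (metis dvd_triv_right)
qed

lemma hom_restrict_sub:
  assumes "h \<in> hom G A" "H \<subseteq> carrier G"
  shows "h \<in> hom (G\<lparr>carrier := H\<rparr>) A"
  using assms by (auto simp: hom_def)

lemma hom_image_card:
  assumes G: "group G" and A: "group A" and h: "\<pi> \<in> hom G A" and S: "subgroup S G" and fin: "finite S"
  shows "card (\<pi> ` S) * card {x\<in>S. \<pi> x = \<one>\<^bsub>A\<^esub>} = card S"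
proof -
  interpret G: group G by (rule G)
  interpret A: group A by (rule A)
  interpret S': group "G\<lparr>carrier := S\<rparr>" using G.subgroup_imp_group[OF S] .
  have ghom: "group_hom G A \<pi>" using G A h by (simp add: group_hom_def group_hom_axioms_def)
  have sub: "subgroup (\<pi> ` S) A" using group_hom.subgroup_img_is_subgroup[OF ghom S] .
  interpret B: group "A\<lparr>carrier := \<pi> ` S\<rparr>" using A.subgroup_imp_group[OF sub] .
  have h2: "\<pi> \<in> hom (G\<lparr>carrier := S\<rparr>) (A\<lparr>carrier := \<pi> ` S\<rparr>)"
    using h subgroup.subset[OF S] by (auto simp: hom_def)
  have gh2: "group_hom (G\<lparr>carrier := S\<rparr>) (A\<lparr>carrier := \<pi> ` S\<rparr>) \<pi>"
    using h2 by (simp add: group_hom_def group_hom_axioms_def S'.is_group B.is_group)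
  have "(G\<lparr>carrier := S\<rparr>) Mod (kernel (G\<lparr>carrier := S\<rparr>) (A\<lparr>carrier := \<pi> ` S\<rparr>) \<pi>) \<cong> A\<lparr>carrier := \<pi> ` S\<rparr>"
    using group_hom.FactGroup_iso[OF gh2] by simp
  then have o: "order ((G\<lparr>carrier := S\<rparr>) Mod (kernel (G\<lparr>carrier := S\<rparr>) (A\<lparr>carrier := \<pi> ` S\<rparr>) \<pi>)) = card (\<pi> ` S)"
    using iso_same_order unfolding is_iso_def by (fastforce simp: order_def)
  have ker: "kernel (G\<lparr>carrier := S\<rparr>) (A\<lparr>carrier := \<pi> ` S\<rparr>) \<pi> = {x\<in>S. \<pi> x = \<one>\<^bsub>A\<^esub>}"
    by (simp add: kernel_def)
  have "card (rcosets\<^bsub>G\<lparr>carrier := S\<rparr>\<^esub> (kernel (G\<lparr>carrier := S\<rparr>) (A\<lparr>carrier := \<pi> ` S\<rparr>) \<pi>)) * card (kernel (G\<lparr>carrier := S\<rparr>) (A\<lparr>carrier := \<pi> ` S\<rparr>) \<pi>) = card S"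
    using S'.lagrange[OF group_hom.subgroup_kernel[OF gh2]] by (simp add: order_def)
  then show ?thesis using o ker by (simp add: order_def FactGroup_def)
qed

lemma elem_ab_ppow:
  assumes A: "group A" and EA: "elem_abelian_sub A p E"
  shows "\<exists>e. card E = p^e"
proof (rule ccontr)
  assume nex: "\<not> (\<exists>e. card E = p^e)"
  interpret A: group A by (rule A)
  have p: "Factorial_Ring.prime p" and E: "subgroup E A" and fE: "finite E"
    and pw: "\<And>x. x \<in> E \<Longrightarrow> x [^]\<^bsub>A\<^esub> p = \<one>\<^bsub>A\<^esub>"
    using EA by (auto simp: elem_abelian_sub_def)
  have "\<one>\<^bsub>A\<^esub> \<in> E" using E subgroup.one_closed by blast
  then have cE: "card E \<noteq> 0" using fE by auto
  obtain r where r: "r \<in> prime_factors (card E)" "r \<noteq> p"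
    using Ex_other_prime_factor[OF cE _ p] nex by auto
  have rp: "Factorial_Ring.prime r" and rd: "r dvd card E" using r by auto
  then obtain m' where m': "card E = r^1 * m'" by auto
  interpret E': group "A\<lparr>carrier := E\<rparr>" using A.subgroup_imp_group[OF E] .
  obtain H where H: "subgroup H (A\<lparr>carrier := E\<rparr>)" "card H = r^1"
    using sylow_thm[OF rp E'.is_group, of 1 m'] m' fE by (auto simp: order_def)
  have HA: "subgroup H A" using A.incl_subgroup[OF E H(1)] .
  have HE: "H \<subseteq> E" using subgroup.subset[OF H(1)] by simp
  have "card H \<ge> 2" using H(2) rp prime_ge_2_nat by simp
  moreover have "\<one>\<^bsub>A\<^esub> \<in> H" using HA subgroup.one_closed by blast
  moreover have "\<not> H \<subseteq> {\<one>\<^bsub>A\<^esub>}"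
  proof
    assume "H \<subseteq> {\<one>\<^bsub>A\<^esub>}"
    then have "card H \<le> 1" using card_mono[of "{\<one>\<^bsub>A\<^esub>}" H] by simp
    then show False using \<open>card H \<ge> 2\<close> by simp
  qed
  ultimately obtain x where x: "x \<in> H" "x \<noteq> \<one>\<^bsub>A\<^esub>" by blast
  have xA: "x \<in> carrier A" using x HA subgroup.subset by blast
  have "generate A {x} \<subseteq> H" using A.generate_subgroup_incl[OF _ HA] x by blast
  then have "card (generate A {x}) dvd card H"
    using A.subgroup_card_dvd[OF A.generate_is_subgroup HA] xA by blast
  then have d1: "A.ord x dvd r" using A.generate_pow_card[OF xA] H(2) by simp
  have d2: "A.ord x dvd p" using pw[of x] x HE A.pow_eq_id[OF xA] by blast
  have "coprime r p" using rp p r(2) by (simp add: primes_coprime)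
  then have "gcd r p = 1" by (simp add: coprime_iff_gcd_eq_1)
  moreover have "A.ord x dvd gcd r p" using d1 d2 by simp
  ultimately have "A.ord x = 1" by simp
  then show False using A.ord_eq_1[OF xA] x by simp
qed

lemma (in group) normset_subgroup:
  assumes fin: "finite (carrier G)" and S: "subgroup S G"
  shows "subgroup {g\<in>carrier G. \<forall>s\<in>S. g \<otimes> s \<otimes> inv g \<in> S} G" (is "subgroup ?N G")
proof -
  have SG: "\<And>s. s \<in> S \<Longrightarrow> s \<in> carrier G" using S subgroup.subset by blast
  have mult: "a \<otimes> b \<in> ?N" if a: "a \<in> ?N" and b: "b \<in> ?N" for a b
  proof -
    have aG: "a \<in> carrier G" and bG: "b \<in> carrier G" using a b by auto
    { fix s assume s: "s \<in> S"
      have "b \<otimes> s \<otimes> inv b \<in> S" using b s by auto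
      then have "a \<otimes> (b \<otimes> s \<otimes> inv b) \<otimes> inv a \<in> S" using a by auto
      moreover have "a \<otimes> (b \<otimes> s \<otimes> inv b) \<otimes> inv a = a \<otimes> b \<otimes> s \<otimes> inv (a \<otimes> b)"
        using aG bG SG[OF s] by (simp add: m_assoc inv_mult_group)
      ultimately have "a \<otimes> b \<otimes> s \<otimes> inv (a \<otimes> b) \<in> S" by simp }
    then show ?thesis using aG bG by auto
  qed
  have one: "\<one> \<in> ?N" using SG by auto
  have pow: "a [^] (n::nat) \<in> ?N" if a: "a \<in> ?N" for a n
  proof (induction n)
    case 0 then show ?case using one by simp
  next
    case (Suc n)
    have "a [^] Suc n = a [^] n \<otimes> a" using a by (simp add: nat_pow_Suc)
    then show ?case using mult[OF Suc a] by simp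
  qed
  show ?thesis
  proof (rule subgroupI)
    show "?N \<subseteq> carrier G" by auto
    show "?N \<noteq> {}" using one by blast
    fix a assume a: "a \<in> ?N"
    then have aG: "a \<in> carrier G" by auto
    have o: "ord a \<ge> 1" using ord_ge_1[OF fin aG] .
    have "Suc (ord a - 1) = ord a" using o by simp
    then have "a [^] (ord a - 1) \<otimes> a = a [^] ord a"
      using nat_pow_Suc[of a "ord a - 1"] by simp
    then have "a [^] (ord a - 1) \<otimes> a = \<one>" using aG by simp
    then have "inv a = a [^] (ord a - 1)" using aG by (simp add: inv_equality)
    then show "inv a \<in> ?N" using pow[OF a] by simp
  next
    fix a b assume "a \<in> ?N" "b \<in> ?N" then show "a \<otimes> b \<in> ?N" by (rule mult)
  qed
qed

lemma (in group) conj_hom: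
  assumes y: "y \<in> carrier G"
  shows "(\<lambda>s. y \<otimes> s \<otimes> inv y) \<in> hom G G"
proof -
  have c: "inv y \<otimes> (y \<otimes> z) = z" if "z \<in> carrier G" for z
    using that y by (simp add: m_assoc[symmetric])
  show ?thesis using y by (auto simp: hom_def m_assoc c)
qed

lemma (in group) frattini_step:
  assumes fin: "finite (carrier G)" and p: "Factorial_Ring.prime p" and K: "K \<lhd> G"
    and S: "subgroup S G" and SK: "S \<subseteq> K" and cS: "card S = p^a" and cK: "card K = p^a * m"
    and nd: "\<not> p dvd m" and y: "y \<in> carrier G"
  shows "\<exists>x\<in>K. \<forall>s\<in>S. (inv x \<otimes> y) \<otimes> s \<otimes> inv (inv x \<otimes> y) \<in> S"
proof -
  define T where "T = (\<lambda>s. y \<otimes> s \<otimes> inv y) ` S"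
  have gh: "group_hom G G (\<lambda>s. y \<otimes> s \<otimes> inv y)"
    using conj_hom[OF y] by (simp add: group_hom_def group_hom_axioms_def is_group)
  have T: "subgroup T G" unfolding T_def using group_hom.subgroup_img_is_subgroup[OF gh S] .
  have SG: "\<And>s. s \<in> S \<Longrightarrow> s \<in> carrier G" using S subgroup.subset by blast
  have KS: "subgroup K G" using K normal_imp_subgroup by blast
  have TK: "T \<subseteq> K" unfolding T_def using normal_invE(2)[OF K y] SK by blast
  have "inj_on (\<lambda>s. y \<otimes> s \<otimes> inv y) S"
    by (rule inj_onI) (use y SG in simp)
  then have cT: "card T = p^a" unfolding T_def using cS by (simp add: card_image)
  interpret K': group "G\<lparr>carrier := K\<rparr>" using subgroup_imp_group[OF KS] .
  have S': "subgroup S (G\<lparr>carrier := K\<rparr>)" using subgroup_incl[OF S KS SK] .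
  have T': "subgroup T (G\<lparr>carrier := K\<rparr>)" using subgroup_incl[OF T KS TK] .
  have finK: "finite (carrier (G\<lparr>carrier := K\<rparr>))" using finite_subset[OF subgroup.subset[OF KS] fin] by simp
  obtain x' where x': "x' \<in> K" "\<forall>t\<in>T. x' \<otimes> t \<otimes> inv\<^bsub>G\<lparr>carrier := K\<rparr>\<^esub> x' \<in> S"
    using K'.sylow_fix[OF finK p S' T' cS cT _ nd] cK by (auto simp: order_def)
  have x'G: "x' \<in> carrier G" using subgroup.subset[OF KS] x'(1) by blast
  have inv': "inv\<^bsub>G\<lparr>carrier := K\<rparr>\<^esub> x' = inv x'" using m_inv_consistent[OF KS x'(1)] .
  show ?thesis
  proof (intro bexI ballI)
    show "inv x' \<in> K" using subgroup.m_inv_closed[OF KS x'(1)] .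
    fix s assume s: "s \<in> S"
    have "y \<otimes> s \<otimes> inv y \<in> T" unfolding T_def using s by blast
    then have "x' \<otimes> (y \<otimes> s \<otimes> inv y) \<otimes> inv x' \<in> S" using x'(2) inv' by metis
    moreover have "x' \<otimes> (y \<otimes> s \<otimes> inv y) \<otimes> inv x' = (inv (inv x') \<otimes> y) \<otimes> s \<otimes> inv (inv (inv x') \<otimes> y)"
      using x'G y SG[OF s] by (simp add: m_assoc inv_mult_group)
    ultimately show "(inv (inv x') \<otimes> y) \<otimes> s \<otimes> inv (inv (inv x') \<otimes> y) \<in> S" by simp
  qed
qed

theorem lemma3p11:
  fixes A :: "('a, 'b) monoid_scheme" and G :: "('c, 'd) monoid_scheme"
  assumes "affine_cyclic_decomp A p E C"
    and "group G" and "finite (carrier G)"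
    and "N \<lhd> G" and "G Mod N \<cong> A"
    and "\<And>H M. subgroup H G \<Longrightarrow> H \<noteq> carrier G \<Longrightarrow>
           normal M (G\<lparr>carrier := H\<rparr>) \<Longrightarrow> \<not> ((G\<lparr>carrier := H\<rparr>) Mod M \<cong> A)"
  shows "\<exists>P Q q k. P \<lhd> G \<and> (\<exists>n. card P = p ^ n) \<and>
           subgroup Q G \<and> cyclic_group (subgroup_generated G Q) \<and>
           Factorial_Ring.prime q \<and> q \<noteq> p \<and> card Q = q ^ k \<and>
           P \<inter> Q = {\<one>\<^bsub>G\<^esub>} \<and> P <#>\<^bsub>G\<^esub> Q = carrier G \<and>
           card ((\<lambda>x. \<lambda>y\<in>P. x \<otimes>\<^bsub>G\<^esub> y \<otimes>\<^bsub>G\<^esub> inv\<^bsub>G\<^esub> x) ` Q) \<ge> card C"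
proof -
  have Agrp: "group A" and finA: "finite (carrier A)" and EA: "elem_abelian_sub A p E"
    and EnA: "E \<lhd> A" and CA: "subgroup C A" and cyc: "cyclic_group (subgroup_generated A C)"
    and ndC: "\<not> p dvd card C" and EC: "E <#>\<^bsub>A\<^esub> C = carrier A"
    and faith: "\<And>c. c \<in> C \<Longrightarrow> (\<forall>e\<in>E. c \<otimes>\<^bsub>A\<^esub> e \<otimes>\<^bsub>A\<^esub> inv\<^bsub>A\<^esub> c = e) \<Longrightarrow> c = \<one>\<^bsub>A\<^esub>"
    using assms(1) unfolding affine_cyclic_decomp_def by blast+
  obtain q k where q: "Factorial_Ring.prime q" and cC: "card C = q ^ k"
    using assms(1) unfolding affine_cyclic_decomp_def by blast
  interpret G: group G by (rule assms(2))
  interpret A: group A by (rule Agrp)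
  have finG: "finite (carrier G)" by (rule assms(3))
  have p: "Factorial_Ring.prime p" and ES: "subgroup E A" and finE: "finite E"
    using EA by (auto simp: elem_abelian_sub_def)
  obtain e where cE: "card E = p ^ e" using elem_ab_ppow[OF Agrp EA] by blast
  obtain \<phi> where \<phi>: "\<phi> \<in> iso (G Mod N) A" using assms(5) unfolding is_iso_def by blast
  define \<pi> where "\<pi> = \<phi> \<circ> (\<lambda>x. N #>\<^bsub>G\<^esub> x)"
  have hom\<pi>: "\<pi> \<in> hom G A"
    unfolding \<pi>_def using hom_compose[OF normal.r_coset_hom_Mod[OF assms(4)]] \<phi> by (auto simp: iso_def)
  have gh: "group_hom G A \<pi>" using hom\<pi> by (simp add: group_hom_def group_hom_axioms_def G.is_group A.is_group)
  have surj: "\<pi> ` carrier G = carrier A"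
  proof -
    have "\<phi> ` carrier (G Mod N) = carrier A" using \<phi> by (auto simp: iso_def bij_betw_def)
    then show ?thesis unfolding \<pi>_def carrier_FactGroup by (simp add: image_comp)
  qed
  have \<pi>G: "\<And>x. x \<in> carrier G \<Longrightarrow> \<pi> x \<in> carrier A" using hom\<pi> by (auto simp: hom_def)
  have \<pi>mult: "\<And>x y. x \<in> carrier G \<Longrightarrow> y \<in> carrier G \<Longrightarrow> \<pi> (x \<otimes>\<^bsub>G\<^esub> y) = \<pi> x \<otimes>\<^bsub>A\<^esub> \<pi> y"
    using hom\<pi> by (auto simp: hom_def)
  have \<pi>inv: "\<And>x. x \<in> carrier G \<Longrightarrow> \<pi> (inv\<^bsub>G\<^esub> x) = inv\<^bsub>A\<^esub> \<pi> x"
    using group_hom.hom_inv[OF gh] by blast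
  have \<pi>one: "\<pi> \<one>\<^bsub>G\<^esub> = \<one>\<^bsub>A\<^esub>" using group_hom.hom_one[OF gh] .
  have minimal: "H = carrier G" if H: "subgroup H G" and img: "\<pi> ` H = carrier A" for H
  proof (rule ccontr)
    assume ne: "H \<noteq> carrier G"
    interpret H: group "G\<lparr>carrier := H\<rparr>" using G.subgroup_imp_group[OF H] .
    have gh2: "group_hom (G\<lparr>carrier := H\<rparr>) A \<pi>"
      using hom_restrict_sub[OF hom\<pi> subgroup.subset[OF H]]
      by (simp add: group_hom_def group_hom_axioms_def H.is_group A.is_group)
    have "(G\<lparr>carrier := H\<rparr>) Mod (kernel (G\<lparr>carrier := H\<rparr>) A \<pi>) \<cong> A"
      using group_hom.FactGroup_iso[OF gh2] img by simp
    moreover have "kernel (G\<lparr>carrier := H\<rparr>) A \<pi> \<lhd> G\<lparr>carrier := H\<rparr>"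
      using group_hom.normal_kernel[OF gh2] .
    ultimately show False using assms(6)[OF H ne] by blast
  qed
  define K where "K = {x \<in> carrier G. \<pi> x \<in> E}"
  have EsubA: "E \<subseteq> carrier A" using subgroup.subset[OF ES] .
  have KS: "subgroup K G"
  proof (rule G.subgroupI)
    show "K \<subseteq> carrier G" unfolding K_def by (rule subsetI) simp
    have "\<one>\<^bsub>G\<^esub> \<in> K" unfolding K_def using \<pi>one subgroup.one_closed[OF ES] by simp
    then show "K \<noteq> {}" by blast
    fix a assume a: "a \<in> K"
    then have aG: "a \<in> carrier G" and ae: "\<pi> a \<in> E" unfolding K_def by simp_all
    have "\<pi> (inv\<^bsub>G\<^esub> a) \<in> E" using \<pi>inv[OF aG] subgroup.m_inv_closed[OF ES ae] by simp
    then show "inv\<^bsub>G\<^esub> a \<in> K" unfolding K_def using aG by simp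
  next
    fix a b assume a: "a \<in> K" and b: "b \<in> K"
    then have aG: "a \<in> carrier G" and ae: "\<pi> a \<in> E" and bG: "b \<in> carrier G" and be: "\<pi> b \<in> E"
      unfolding K_def by simp_all
    have "\<pi> (a \<otimes>\<^bsub>G\<^esub> b) \<in> E" using \<pi>mult[OF aG bG] subgroup.m_closed[OF ES ae be] by simp
    then show "a \<otimes>\<^bsub>G\<^esub> b \<in> K" unfolding K_def using aG bG by simp
  qed
  have KN: "K \<lhd> G"
  proof (rule G.normal_invI[OF KS])
    fix x h assume x: "x \<in> carrier G" and h: "h \<in> K"
    have hG: "h \<in> carrier G" and he: "\<pi> h \<in> E" using h unfolding K_def by simp_all
    have xh: "x \<otimes>\<^bsub>G\<^esub> h \<otimes>\<^bsub>G\<^esub> inv\<^bsub>G\<^esub> x \<in> carrier G" using x hG by simp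
    have "\<pi> (x \<otimes>\<^bsub>G\<^esub> h \<otimes>\<^bsub>G\<^esub> inv\<^bsub>G\<^esub> x) = \<pi> x \<otimes>\<^bsub>A\<^esub> \<pi> h \<otimes>\<^bsub>A\<^esub> inv\<^bsub>A\<^esub> \<pi> x"
      using \<pi>mult[of "x \<otimes>\<^bsub>G\<^esub> h" "inv\<^bsub>G\<^esub> x"] \<pi>mult[OF x hG] \<pi>inv[OF x] x hG by simp
    moreover have "\<pi> x \<otimes>\<^bsub>A\<^esub> \<pi> h \<otimes>\<^bsub>A\<^esub> inv\<^bsub>A\<^esub> \<pi> x \<in> E"
      using A.normal_invE(2)[OF EnA \<pi>G[OF x] he] .
    ultimately show "x \<otimes>\<^bsub>G\<^esub> h \<otimes>\<^bsub>G\<^esub> inv\<^bsub>G\<^esub> x \<in> K" unfolding K_def using xh by simp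
  qed
  have finK: "finite K" using finite_subset[OF subgroup.subset[OF KS] finG] .
  have imK: "\<pi> ` K = E"
  proof
    show "\<pi> ` K \<subseteq> E" unfolding K_def by blast
    show "E \<subseteq> \<pi> ` K"
    proof
      fix z assume z: "z \<in> E"
      then have "z \<in> \<pi> ` carrier G" using surj EsubA by blast
      then obtain x where "x \<in> carrier G" "\<pi> x = z" by blast
      then show "z \<in> \<pi> ` K" unfolding K_def using z by blast
    qed
  qed
  define ker where "ker = kernel G A \<pi>"
  have kerS: "subgroup ker G" unfolding ker_def using group_hom.subgroup_kernel[OF gh] .
  have kerK: "{x\<in>K. \<pi> x = \<one>\<^bsub>A\<^esub>} = ker"
    unfolding K_def ker_def kernel_def using subgroup.one_closed[OF ES] by auto
  have cK: "card E * card ker = card K"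
    using hom_image_card[OF assms(2) Agrp hom\<pi> KS finK] imK kerK by simp
  have finker: "finite ker" using finite_subset[OF subgroup.subset[OF kerS] finG] .
  have "card ker > 0" using finker subgroup.one_closed[OF kerS] card_gt_0_iff by blast
  then obtain u w where uw: "card ker = p^u * w" "\<not> p dvd w" using nat_decomp[OF _ p] by blast
  have cK2: "card K = p^(e+u) * w" using cK cE uw by (simp add: power_add)
  interpret K': group "G\<lparr>carrier := K\<rparr>" using G.subgroup_imp_group[OF KS] .
  obtain S where S': "subgroup S (G\<lparr>carrier := K\<rparr>)" and cS: "card S = p^(e+u)"
    using sylow_thm[OF p K'.is_group, of "e+u" w] cK2 finK by (auto simp: order_def)
  have SS: "subgroup S G" using G.incl_subgroup[OF KS S'] .
  have SK: "S \<subseteq> K" using subgroup.subset[OF S'] by simp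
  have finS: "finite S" using finite_subset[OF SK finK] .
  have SG: "S \<subseteq> carrier G" using subgroup.subset[OF SS] .
  have imS: "\<pi> ` S = E"
  proof -
    define SK1 where "SK1 = S \<inter> ker"
    have SK1eq: "{x\<in>S. \<pi> x = \<one>\<^bsub>A\<^esub>} = SK1" unfolding SK1_def ker_def kernel_def using SG by auto
    have c1: "card (\<pi> ` S) * card SK1 = p^(e+u)"
      using hom_image_card[OF assms(2) Agrp hom\<pi> SS finS] SK1eq cS by simp
    have SK1S: "subgroup SK1 G" unfolding SK1_def using G.subgroups_Inter_pair[OF SS kerS] .
    have "card SK1 dvd p^(e+u)" using G.subgroup_card_dvd[OF SK1S SS] cS unfolding SK1_def by auto
    then obtain j where j: "card SK1 = p^j" using divides_primepow_nat[OF p] by blast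
    have "card SK1 dvd card ker" using G.subgroup_card_dvd[OF SK1S kerS] unfolding SK1_def by auto
    then have "p^j dvd p^u * w" using j uw by simp
    moreover have "coprime (p^j) w" using p uw(2) by (simp add: prime_imp_coprime)
    ultimately have "p^j dvd p^u" using coprime_dvd_mult_left_iff by blast
    then obtain i where i: "i \<le> u" "p^j = p^i" using divides_primepow_nat[OF p] by blast
    have "1 < p" using prime_gt_1_nat[OF p] by simp
    then have "j = i" using i(2) power_inject_exp by blast
    then have ju: "j \<le> u" using i(1) by simp
    have "card (\<pi> ` S) * p^j = p^(e+u)" using c1 j by simp
    moreover have "p^(e+u) = p^(e+u-j) * p^j" using ju by (simp flip: power_add)
    moreover have "p > 0" using \<open>1 < p\<close> by simp
    ultimately have "card (\<pi> ` S) = p^(e+u-j)" by auto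
    moreover have "p^e \<le> p^(e+u-j)" using ju \<open>1 < p\<close> by (intro power_increasing) auto
    ultimately have "card (\<pi> ` S) \<ge> p^e" by simp
    moreover have "\<pi> ` S \<subseteq> E" using SK imK by blast
    ultimately show ?thesis using finE cE card_seteq[of E "\<pi> ` S"] by simp
  qed
  \<comment> \<open>Frattini argument: S is normal\<close>
  define NS where "NS = {g\<in>carrier G. \<forall>s\<in>S. g \<otimes>\<^bsub>G\<^esub> s \<otimes>\<^bsub>G\<^esub> inv\<^bsub>G\<^esub> g \<in> S}"
  have NSS: "subgroup NS G" unfolding NS_def using G.normset_subgroup[OF finG SS] .
  have SNS: "S \<subseteq> NS"
  proof
    fix s assume s: "s \<in> S"
    have "\<forall>t\<in>S. s \<otimes>\<^bsub>G\<^esub> t \<otimes>\<^bsub>G\<^esub> inv\<^bsub>G\<^esub> s \<in> S"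
    proof
      fix t assume t: "t \<in> S"
      have "s \<otimes>\<^bsub>G\<^esub> t \<in> S" using subgroup.m_closed[OF SS s t] .
      then show "s \<otimes>\<^bsub>G\<^esub> t \<otimes>\<^bsub>G\<^esub> inv\<^bsub>G\<^esub> s \<in> S"
        using subgroup.m_closed[OF SS _ subgroup.m_inv_closed[OF SS s]] by blast
    qed
    then show "s \<in> NS" unfolding NS_def using s SG by blast
  qed
  have "\<pi> ` NS = carrier A"
  proof
    show "\<pi> ` NS \<subseteq> carrier A"
    proof
      fix z assume "z \<in> \<pi> ` NS"
      then obtain g where "g \<in> NS" "z = \<pi> g" by blast
      then show "z \<in> carrier A" using \<pi>G unfolding NS_def by simp
    qed
    show "carrier A \<subseteq> \<pi> ` NS"
    proof
      fix a assume a: "a \<in> carrier A"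
      then have "a \<in> \<pi> ` carrier G" using surj by simp
      then obtain y where y: "y \<in> carrier G" "\<pi> y = a" by (auto simp: image_iff)
      have "\<exists>x\<in>K. \<forall>s\<in>S. (inv\<^bsub>G\<^esub> x \<otimes>\<^bsub>G\<^esub> y) \<otimes>\<^bsub>G\<^esub> s \<otimes>\<^bsub>G\<^esub> inv\<^bsub>G\<^esub> (inv\<^bsub>G\<^esub> x \<otimes>\<^bsub>G\<^esub> y) \<in> S"
        by (rule G.frattini_step[OF finG p KN SS SK cS cK2 uw(2) y(1)])
      then obtain x where x: "x \<in> K" and xn: "\<forall>s\<in>S. (inv\<^bsub>G\<^esub> x \<otimes>\<^bsub>G\<^esub> y) \<otimes>\<^bsub>G\<^esub> s \<otimes>\<^bsub>G\<^esub> inv\<^bsub>G\<^esub> (inv\<^bsub>G\<^esub> x \<otimes>\<^bsub>G\<^esub> y) \<in> S" ..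
      have xG: "x \<in> carrier G" using x unfolding K_def by simp
      have z1: "inv\<^bsub>G\<^esub> x \<otimes>\<^bsub>G\<^esub> y \<in> NS" unfolding NS_def using xn xG y(1) by simp
      have "\<pi> x \<in> \<pi> ` S" using x imS unfolding K_def by simp
      then obtain s where s: "s \<in> S" "\<pi> s = \<pi> x" by auto
      have sG: "s \<in> carrier G" using s SG by blast
      have z: "s \<otimes>\<^bsub>G\<^esub> (inv\<^bsub>G\<^esub> x \<otimes>\<^bsub>G\<^esub> y) \<in> NS"
        using subgroup.m_closed[OF NSS] SNS s(1) z1 by blast
      have "\<pi> (s \<otimes>\<^bsub>G\<^esub> (inv\<^bsub>G\<^esub> x \<otimes>\<^bsub>G\<^esub> y)) = \<pi> s \<otimes>\<^bsub>A\<^esub> (inv\<^bsub>A\<^esub> \<pi> x \<otimes>\<^bsub>A\<^esub> \<pi> y)"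
        using \<pi>mult[of s "inv\<^bsub>G\<^esub> x \<otimes>\<^bsub>G\<^esub> y"] \<pi>mult[of "inv\<^bsub>G\<^esub> x" y] \<pi>inv[OF xG] sG xG y(1) by simp
      also have "\<dots> = \<pi> y" using s(2) \<pi>G[OF xG] \<pi>G[OF y(1)] by (simp add: A.m_assoc[symmetric])
      finally have eqa: "a = \<pi> (s \<otimes>\<^bsub>G\<^esub> (inv\<^bsub>G\<^esub> x \<otimes>\<^bsub>G\<^esub> y))" using y(2) by simp
      from eqa z show "a \<in> \<pi> ` NS" by (rule image_eqI)
    qed
  qed
  then have "NS = carrier G" using minimal[OF NSS] by simp
  have SN: "S \<lhd> G"
  proof (rule G.normal_invI[OF SS])
    fix x h assume "x \<in> carrier G" "h \<in> S"
    then show "x \<otimes>\<^bsub>G\<^esub> h \<otimes>\<^bsub>G\<^esub> inv\<^bsub>G\<^esub> x \<in> S" using \<open>NS = carrier G\<close> unfolding NS_def by blast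
  qed
  interpret SGC: group "subgroup_generated A C" by simp
  have carrSGC: "carrier (subgroup_generated A C) = C"
    using subgroup.carrier_subgroup_generated_subgroup[OF CA] .
  obtain c where cinC: "c \<in> C" and Crange: "C = range (\<lambda>n::int. c [^]\<^bsub>A\<^esub> n)"
  proof -
    from cyc obtain c where c: "c \<in> carrier (subgroup_generated A C)"
      and cr: "carrier (subgroup_generated A C) = range (\<lambda>n::int. c [^]\<^bsub>subgroup_generated A C\<^esub> n)"
      using SGC.cyclic_group by blast
    have "range (\<lambda>n::int. c [^]\<^bsub>subgroup_generated A C\<^esub> n) = range (\<lambda>n::int. c [^]\<^bsub>A\<^esub> n)"
      using A.int_pow_subgroup_generated[OF c] by simp
    then show ?thesis using that c cr carrSGC by simp
  qed
  have CsubA: "C \<subseteq> carrier A" using subgroup.subset[OF CA] .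
  have cA: "c \<in> carrier A" using cinC CsubA by blast
  have genc: "generate A {c} = C" using A.generate_pow[OF cA] Crange by auto
  have ordc: "A.ord c = card C" using A.generate_pow_card[OF cA] genc by simp
  obtain q' k' where q': "Factorial_Ring.prime q'" "q' \<noteq> p" and cC': "card C = q' ^ k'"
  proof (cases "q = p")
    case True
    then have "k = 0" using ndC cC p by (cases k) auto
    then have c1: "card C = 1" using cC by simp
    define r where "r = (if p = 2 then 3 else (2::nat))"
    have "Factorial_Ring.prime r" "r \<noteq> p" unfolding r_def by auto
    then show ?thesis using that[of r 0] c1 by simp
  next
    case False
    then show ?thesis using that[of q k] q cC by simp
  qed
  have "c \<in> \<pi> ` carrier G" using surj cA by simp
  then obtain g0 where g0: "g0 \<in> carrier G" "\<pi> g0 = c" by (auto simp: image_iff)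
  have "G.ord g0 > 0" using G.ord_ge_1[OF finG g0(1)] by simp
  then obtain b s where bs: "G.ord g0 = q'^b * s" "\<not> q' dvd s" using nat_decomp[OF _ q'(1)] by blast
  have s0: "s \<noteq> 0" using bs(2) by (metis dvd_0_right)
  define g where "g = g0 [^]\<^bsub>G\<^esub> s"
  have gG: "g \<in> carrier G" unfolding g_def using g0(1) by simp
  have ordg: "G.ord g = q'^b"
    unfolding g_def using G.ord_pow[OF g0(1) _ s0] bs(1) s0 by simp
  have pig: "\<pi> g = c [^]\<^bsub>A\<^esub> s" unfolding g_def using group_hom.hom_nat_pow[OF gh g0(1)] g0(2) by simp
  have cop: "coprime s (A.ord c)" using ordc cC' bs(2) q'(1)
    by (simp add: prime_imp_coprime coprime_commute)
  have ordcs: "A.ord (c [^]\<^bsub>A\<^esub> s) = A.ord c" using A.pow_ord_eq_ord_iff[OF finA cA] cop by simp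
  have csA: "c [^]\<^bsub>A\<^esub> s \<in> carrier A" using cA by simp
  have gencs: "generate A {c [^]\<^bsub>A\<^esub> s} = C"
  proof (rule card_subset_eq)
    show "finite C" using finite_subset[OF CsubA finA] .
    have "c [^]\<^bsub>A\<^esub> (int s) \<in> C" using Crange by blast
    then have "c [^]\<^bsub>A\<^esub> s \<in> C" by (simp add: int_pow_int)
    then show "generate A {c [^]\<^bsub>A\<^esub> s} \<subseteq> C" using A.generate_subgroup_incl[OF _ CA] by blast
    show "card (generate A {c [^]\<^bsub>A\<^esub> s}) = card C"
      using A.generate_pow_card[OF csA] ordcs ordc by simp
  qed
  define Q where "Q = generate G {g}"
  have QS: "subgroup Q G" unfolding Q_def using G.generate_is_subgroup gG by simp
  have cQ: "card Q = q'^b" unfolding Q_def using G.generate_pow_card[OF gG] ordg by simp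
  have imQ: "\<pi> ` Q = C"
    unfolding Q_def using group_hom.generate_img[OF gh, of "{g}"] gG pig gencs by simp
  have QG: "Q \<subseteq> carrier G" using subgroup.subset[OF QS] .
  have cycQ: "cyclic_group (subgroup_generated G Q)"
  proof -
    interpret SGQ: group "subgroup_generated G Q" by simp
    have cQ': "carrier (subgroup_generated G Q) = Q" using subgroup.carrier_subgroup_generated_subgroup[OF QS] .
    have "g \<in> Q" unfolding Q_def by (rule generate.incl) simp
    then have gQ: "g \<in> carrier (subgroup_generated G Q)" using cQ' by simp
    have "carrier (subgroup_generated G Q) = range (\<lambda>n::int. g [^]\<^bsub>subgroup_generated G Q\<^esub> n)"
      using G.int_pow_subgroup_generated[OF gQ] cQ' G.generate_pow[OF gG] unfolding Q_def by auto
    then show ?thesis using SGQ.cyclic_group gQ by blast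
  qed
  have inter: "S \<inter> Q = {\<one>\<^bsub>G\<^esub>}"
  proof -
    have IS: "subgroup (S \<inter> Q) G" using G.subgroups_Inter_pair[OF SS QS] .
    have d1: "card (S \<inter> Q) dvd p^(e+u)" using G.subgroup_card_dvd[OF IS SS] cS by simp
    have d2: "card (S \<inter> Q) dvd q'^b" using G.subgroup_card_dvd[OF IS QS] cQ by simp
    have "coprime (p^(e+u)) (q'^b)" using p q' by (simp add: primes_coprime)
    then have "card (S \<inter> Q) = 1" using d1 d2 by (meson coprime_common_divisor_nat)
    moreover have "\<one>\<^bsub>G\<^esub> \<in> S \<inter> Q" using subgroup.one_closed[OF SS] subgroup.one_closed[OF QS] by simp
    ultimately show ?thesis by (metis card_1_singletonE singletonD)
  qed
  have SQ: "S <#>\<^bsub>G\<^esub> Q = carrier G"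
  proof (rule minimal)
    interpret SI: second_isomorphism_grp S G Q
      by (simp add: second_isomorphism_grp_def second_isomorphism_grp_axioms_def SN QS)
    show "subgroup (S <#>\<^bsub>G\<^esub> Q) G" using SI.normal_set_mult_subgroup .
    show "\<pi> ` (S <#>\<^bsub>G\<^esub> Q) = carrier A"
    proof
      show "\<pi> ` (S <#>\<^bsub>G\<^esub> Q) \<subseteq> carrier A"
      proof
        fix z assume "z \<in> \<pi> ` (S <#>\<^bsub>G\<^esub> Q)"
        then obtain v where v: "v \<in> S <#>\<^bsub>G\<^esub> Q" "z = \<pi> v" by blast
        have "S <#>\<^bsub>G\<^esub> Q \<subseteq> carrier G" using G.setmult_subset_G[OF SG QG] .
        then show "z \<in> carrier A" using v \<pi>G by blast
      qed
      show "carrier A \<subseteq> \<pi> ` (S <#>\<^bsub>G\<^esub> Q)"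
      proof
        fix a assume "a \<in> carrier A"
        then have "a \<in> E <#>\<^bsub>A\<^esub> C" using EC by simp
        then obtain e1 c1 where ec: "e1 \<in> E" "c1 \<in> C" "a = e1 \<otimes>\<^bsub>A\<^esub> c1" unfolding set_mult_def by blast
        have "e1 \<in> \<pi> ` S" using ec(1) imS by simp
        then obtain u1 where u1: "u1 \<in> S" "\<pi> u1 = e1" by (auto simp: image_iff)
        have "c1 \<in> \<pi> ` Q" using ec(2) imQ by simp
        then obtain v1 where v1: "v1 \<in> Q" "\<pi> v1 = c1" by (auto simp: image_iff)
        have "u1 \<otimes>\<^bsub>G\<^esub> v1 \<in> S <#>\<^bsub>G\<^esub> Q" unfolding set_mult_def using u1(1) v1(1) by blast
        moreover have "a = \<pi> (u1 \<otimes>\<^bsub>G\<^esub> v1)" using \<pi>mult[of u1 v1] u1 v1 SG QG ec(3) by auto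
        ultimately show "a \<in> \<pi> ` (S <#>\<^bsub>G\<^esub> Q)" by (intro image_eqI[of a \<pi> "u1 \<otimes>\<^bsub>G\<^esub> v1"])
      qed
    qed
  qed
  define \<phi>c where "\<phi>c = (\<lambda>x. \<lambda>y\<in>S. x \<otimes>\<^bsub>G\<^esub> y \<otimes>\<^bsub>G\<^esub> inv\<^bsub>G\<^esub> x)"
  have canc: "\<And>a z. a \<in> carrier A \<Longrightarrow> z \<in> carrier A \<Longrightarrow> inv\<^bsub>A\<^esub> a \<otimes>\<^bsub>A\<^esub> (a \<otimes>\<^bsub>A\<^esub> z) = z"
    by (simp add: A.m_assoc[symmetric])
  have key: "\<pi> x = \<pi> y" if x: "x \<in> Q" and y: "y \<in> Q" and eq: "\<phi>c x = \<phi>c y" for x y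
  proof -
    have xG: "x \<in> carrier G" and yG: "y \<in> carrier G" using x y QG by auto
    have xC: "\<pi> x \<in> C" and yC: "\<pi> y \<in> C" using x y imQ by auto
    have xA: "\<pi> x \<in> carrier A" and yA: "\<pi> y \<in> carrier A" using xC yC CsubA by auto
    define d where "d = inv\<^bsub>A\<^esub> \<pi> y \<otimes>\<^bsub>A\<^esub> \<pi> x"
    have dC: "d \<in> C" unfolding d_def using subgroup.m_closed[OF CA subgroup.m_inv_closed[OF CA yC] xC] .
    have "\<forall>e'\<in>E. d \<otimes>\<^bsub>A\<^esub> e' \<otimes>\<^bsub>A\<^esub> inv\<^bsub>A\<^esub> d = e'"
    proof
      fix e' assume e': "e' \<in> E"
      then have "e' \<in> \<pi> ` S" using imS by simp
      then obtain v where v: "v \<in> S" "\<pi> v = e'" by (auto simp: image_iff)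
      have vG: "v \<in> carrier G" using v SG by blast
      have eA: "e' \<in> carrier A" using e' EsubA by blast
      have "\<phi>c x v = \<phi>c y v" using eq by simp
      then have cg: "x \<otimes>\<^bsub>G\<^esub> v \<otimes>\<^bsub>G\<^esub> inv\<^bsub>G\<^esub> x = y \<otimes>\<^bsub>G\<^esub> v \<otimes>\<^bsub>G\<^esub> inv\<^bsub>G\<^esub> y" using v unfolding \<phi>c_def by simp
      have pc: "\<pi> (z \<otimes>\<^bsub>G\<^esub> v \<otimes>\<^bsub>G\<^esub> inv\<^bsub>G\<^esub> z) = \<pi> z \<otimes>\<^bsub>A\<^esub> e' \<otimes>\<^bsub>A\<^esub> inv\<^bsub>A\<^esub> \<pi> z" if z: "z \<in> carrier G" for z
        using \<pi>mult[of "z \<otimes>\<^bsub>G\<^esub> v" "inv\<^bsub>G\<^esub> z"] \<pi>mult[OF z vG] \<pi>inv[OF z] z vG v(2) by simp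
      have ca: "\<pi> x \<otimes>\<^bsub>A\<^esub> e' \<otimes>\<^bsub>A\<^esub> inv\<^bsub>A\<^esub> \<pi> x = \<pi> y \<otimes>\<^bsub>A\<^esub> e' \<otimes>\<^bsub>A\<^esub> inv\<^bsub>A\<^esub> \<pi> y"
        using pc[OF xG] pc[OF yG] cg by simp
      have "d \<otimes>\<^bsub>A\<^esub> e' \<otimes>\<^bsub>A\<^esub> inv\<^bsub>A\<^esub> d = inv\<^bsub>A\<^esub> \<pi> y \<otimes>\<^bsub>A\<^esub> (\<pi> x \<otimes>\<^bsub>A\<^esub> e' \<otimes>\<^bsub>A\<^esub> inv\<^bsub>A\<^esub> \<pi> x) \<otimes>\<^bsub>A\<^esub> \<pi> y"
        unfolding d_def using xA yA eA by (simp add: A.m_assoc A.inv_mult_group)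
      also have "\<dots> = inv\<^bsub>A\<^esub> \<pi> y \<otimes>\<^bsub>A\<^esub> (\<pi> y \<otimes>\<^bsub>A\<^esub> e' \<otimes>\<^bsub>A\<^esub> inv\<^bsub>A\<^esub> \<pi> y) \<otimes>\<^bsub>A\<^esub> \<pi> y"
        using ca by simp
      also have "\<dots> = e'" using yA eA by (simp add: A.m_assoc canc)
      finally show "d \<otimes>\<^bsub>A\<^esub> e' \<otimes>\<^bsub>A\<^esub> inv\<^bsub>A\<^esub> d = e'" .
    qed
    then have "d = \<one>\<^bsub>A\<^esub>" using faith[OF dC] by blast
    then have "\<pi> y \<otimes>\<^bsub>A\<^esub> d = \<pi> y" using yA by simp
    moreover have "\<pi> y \<otimes>\<^bsub>A\<^esub> d = \<pi> x" unfolding d_def using xA yA by (simp add: A.m_assoc[symmetric])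
    ultimately show ?thesis by simp
  qed
  define h where "h = (\<lambda>F. \<pi> (SOME x. x \<in> Q \<and> \<phi>c x = F))"
  have "\<pi> ` Q \<subseteq> h ` (\<phi>c ` Q)"
  proof
    fix z assume "z \<in> \<pi> ` Q"
    then obtain x where x: "x \<in> Q" "z = \<pi> x" by (auto simp: image_iff)
    define x' where "x' = (SOME x'. x' \<in> Q \<and> \<phi>c x' = \<phi>c x)"
    have "x' \<in> Q \<and> \<phi>c x' = \<phi>c x" unfolding x'_def using someI_ex[of "\<lambda>x'. x' \<in> Q \<and> \<phi>c x' = \<phi>c x"] x(1) by blast
    then have "\<pi> x' = \<pi> x" using key x(1) by blast
    then have "h (\<phi>c x) = z" unfolding h_def using x(2) x'_def by simp
    then show "z \<in> h ` (\<phi>c ` Q)" using x(1) by blast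
  qed
  moreover have finQ: "finite Q" using finite_subset[OF QG finG] .
  ultimately have "card (\<pi> ` Q) \<le> card (h ` (\<phi>c ` Q))" by (intro card_mono) auto
  also have "\<dots> \<le> card (\<phi>c ` Q)" using card_image_le finQ by blast
  finally have bound: "card C \<le> card (\<phi>c ` Q)" using imQ by simp
  show ?thesis
    apply (rule exI[of _ S], rule exI[of _ Q], rule exI[of _ q'], rule exI[of _ b])
    using SN cS QS cycQ q' cQ inter SQ bound unfolding \<phi>c_def by blast
qed

end
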